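(* Let $s, M, Y \in \mathbb{N}$, $N = 2^L$ with $L\ge1$, and let $f_1, \ldots, f_M \in L^2(\mathbb{R}^s)$ be linearly independent. For a tensor $\mathcal{A}$ of order $N$ with dimension $M$ in each mode, let $h(\mathcal{A}) \in L^2((\mathbb{R}^s)^N)$ be the function $(\mathbf{x}_1,\ldots,\mathbf{x}_N) \mapsto \sum_{d_1,\ldots,d_N=1}^M \mathcal{A}_{d_1\ldots d_N} \prod_{i=1}^N f_{d_i}(\mathbf{x}_i)$. The HT model with ranks $r_0,\ldots,r_{L-1}\in\mathbb{N}_{>0}$ has weights $\mathbf{a}^{0,j,\gamma} \in \mathbb{R}^M$ ($j \in [N]$, $\gamma \in [r_0]$), $\mathbf{a}^{l,j,\gamma} \in \mathbb{R}^{r_{l-1}}$ ($l \in [L-1]$, $j \in [N/2^l]$, $\gamma \in [r_l]$), $\mathbf{a}^{L,y} \in \mathbb{R}^{r_{L-1}}$ ($y \in [Y]$), and computes score functions $h_y = h(\mathcal{A}^y)$, $y\in[Y]$, where $\phi^{1,j,\gamma} = \sum_{\alpha=1}^{r_0} a^{1,j,\gamma}_\alpha \mathbf{a}^{0,2j-1,\alpha} \otimes \mathbf{a}^{0,2j,\alpha}$, $\phi^{l,j,\gamma} = \sum_{\alpha=1}^{r_{l-1}} a^{l,j,\gamma}_\alpha \phi^{l-1,2j-1,\alpha} \otimes \phi^{l-1,2j,\alpha}$ for $2 \le l \le L-1$, and $\mathcal{A}^y = \sum_{\alpha=1}^{r_{L-1}} a^{L,y}_\alpha \phi^{L-1,1,\alpha}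 \otimes \phi^{L-1,2,\alpha}$ (for $L=1$, $\mathcal{A}^y=\sum_{\alpha=1}^{r_0}a^{1,y}_\alpha\,\mathbf{a}^{0,1,\alpha}\otimes\mathbf{a}^{0,2,\alpha}$). A CP model with $Z$ hidden channels computes score functions of the form $(\mathbf{x}_1,\ldots,\mathbf{x}_N)\mapsto \sum_{z=1}^Z a_z \prod_{i=1}^N \left( \sum_{d=1}^M a^{z,i}_d f_d(\mathbf{x}_i) \right)$ with arbitrary $a_z \in \mathbb{R}$, $\mathbf{a}^{z,i} \in \mathbb{R}^M$. If the weights of the HT model are drawn from a continuous distribution (absolutely continuous w.r.t. Lebesgue measure on the weight space), then with probability one, for each $y\in[Y]$ the score function $h_y$ cannot be approximated arbitrarily well in $L^2((\mathbb{R}^s)^N)$ by score functions of CP models with fewer than $\min\{r_0, M\}^{N/2}$ hidden channels; that is, there exists $\epsilon > 0$ such that every such CP-model function $g$ satisfies $\int |g - h_y|^2 > \epsilon$. This also holds if the HT model is constrained to weight sharing ($\mathbf{a}^{l,j,\gamma} = \mathbf{a}^{l,\gamma}$ for all $j$, for each $l\in\{0,\ldots,L-1\}$, $\gamma\in[r_l]$, with the shared weights drawn from a continuous distribution), while the CP model remains in its general (unshared) form.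
   Context: $[k]=\{1,\ldots,k\}$; $\otimes$ denotes the tensor product $(\mathcal{A}\otimes\mathcal{B})_{d_1\ldots d_{P+Q}}=\mathcal{A}_{d_1\ldots d_P}\mathcal{B}_{d_{P+1}\ldots d_{P+Q}}$; $a_\alpha$ denotes entry $\alpha$ of vector $\mathbf{a}$. Linear independence of $f_1,\ldots,f_M$ is as elements of the vector space $L^2(\mathbb{R}^s)$. *)

theory Defs
  imports "HOL-Probability.Probability"
begin

type_synonym tensor = "(nat \<Rightarrow> nat) \<Rightarrow> real"
  (* a tensor is indexed by d :: nat => nat, entry d_1 ... d_P read off as d 1, ..., d P *)

definition tensor_prod :: "nat \<Rightarrow> tensor \<Rightarrow> tensor \<Rightarrow> tensor" where
  "tensor_prod P A B = (\<lambda>d. A d * B (\<lambda>i. d (P + i)))"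

(* W l j \<gamma> \<alpha> = entry \<alpha> of weight vector a^{l,j,\<gamma>}; top layer a^{L,y} = W L 1 y *)
fun ht_phi :: "(nat \<Rightarrow> nat \<Rightarrow> nat \<Rightarrow> nat \<Rightarrow> real) \<Rightarrow> (nat \<Rightarrow> nat) \<Rightarrow> nat \<Rightarrow> nat \<Rightarrow> nat \<Rightarrow> tensor" where
  "ht_phi W r 0 j \<gamma> = (\<lambda>d. W 0 j \<gamma> (d 1))"
| "ht_phi W r (Suc l) j \<gamma> = (\<lambda>d. \<Sum>\<alpha>\<in>{1..r l}. W (Suc l) j \<gamma> \<alpha> *
      tensor_prod (2^l) (ht_phi W r l (2*j - 1) \<alpha>) (ht_phi W r l (2*j) \<alpha>) d)"

definition tensor_fn :: "(nat \<Rightarrow> 'a \<Rightarrow> real) \<Rightarrow> nat \<Rightarrow> nat \<Rightarrow> tensor \<Rightarrow> (nat \<Rightarrow> 'a) \<Rightarrow> real" where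
  "tensor_fn f M N A = (\<lambda>x. \<Sum>d\<in>PiE {1..N} (\<lambda>_. {1..M}). A d * (\<Prod>i\<in>{1..N}. f (d i) (x i)))"

definition cp_fn :: "(nat \<Rightarrow> 'a \<Rightarrow> real) \<Rightarrow> nat \<Rightarrow> nat \<Rightarrow> nat \<Rightarrow> (nat \<Rightarrow> real)
      \<Rightarrow> (nat \<Rightarrow> nat \<Rightarrow> nat \<Rightarrow> real) \<Rightarrow> (nat \<Rightarrow> 'a) \<Rightarrow> real" where
  "cp_fn f M N Z a b = (\<lambda>x. \<Sum>z\<in>{1..Z}. a z * (\<Prod>i\<in>{1..N}. \<Sum>d\<in>{1..M}. b z i d * f d (x i)))"

definition is_L2 :: "('a::euclidean_space \<Rightarrow> real) \<Rightarrow> bool" where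
  "is_L2 g \<longleftrightarrow> g \<in> borel_measurable lborel \<and> integrable lborel (\<lambda>x. (g x)^2)"

definition L2_lin_indep :: "(nat \<Rightarrow> 'a::euclidean_space \<Rightarrow> real) \<Rightarrow> nat \<Rightarrow> bool" where
  "L2_lin_indep f M \<longleftrightarrow> (\<forall>c. (AE x in lborel. (\<Sum>d\<in>{1..M}. c d * f d x) = 0) \<longrightarrow> (\<forall>d\<in>{1..M}. c d = 0))"

definition not_CP_approximable :: "(nat \<Rightarrow> 'a::euclidean_space \<Rightarrow> real) \<Rightarrow> nat \<Rightarrow> nat \<Rightarrow> ((nat \<Rightarrow> 'a) \<Rightarrow> real) \<Rightarrow> nat \<Rightarrow> bool" where
  "not_CP_approximable f M N h bound \<longleftrightarrow>
     (\<exists>\<epsilon>>0. \<forall>Z<bound. \<forall>a b.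
        (\<integral>\<^sup>+ x. ennreal ((cp_fn f M N Z a b x - h x)^2) \<partial>(PiM {1..N} (\<lambda>_. lborel))) > ennreal \<epsilon>)"

(* index set of all HT weights: (l, j, gamma, alpha) = entry alpha of a^{l,j,gamma}; top: (L,1,y,alpha) *)
definition ht_idx :: "nat \<Rightarrow> nat \<Rightarrow> nat \<Rightarrow> (nat \<Rightarrow> nat) \<Rightarrow> nat \<Rightarrow> (nat \<times> nat \<times> nat \<times> nat) set" where
  "ht_idx M N L r Y =
     {(0, j, \<gamma>, d) | j \<gamma> d. j \<in> {1..N} \<and> \<gamma> \<in> {1..r 0} \<and> d \<in> {1..M}}
   \<union> {(l, j, \<gamma>, \<alpha>) | l j \<gamma> \<alpha>. 1 \<le> l \<and> l < L \<and> j \<in> {1..N div 2^l} \<and> \<gamma> \<in> {1..r l} \<and> \<alpha> \<in> {1..r (l - 1)}}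
   \<union> {(L, 1, y, \<alpha>) | y \<alpha>. y \<in> {1..Y} \<and> \<alpha> \<in> {1..r (L - 1)}}"

(* weight sharing: (l, 1, gamma, alpha) = entry alpha of shared a^{l,gamma} *)
definition ht_shared_idx :: "nat \<Rightarrow> nat \<Rightarrow> (nat \<Rightarrow> nat) \<Rightarrow> nat \<Rightarrow> (nat \<times> nat \<times> nat \<times> nat) set" where
  "ht_shared_idx M L r Y =
     {(0, 1, \<gamma>, d) | \<gamma> d. \<gamma> \<in> {1..r 0} \<and> d \<in> {1..M}}
   \<union> {(l, 1, \<gamma>, \<alpha>) | l \<gamma> \<alpha>. 1 \<le> l \<and> l < L \<and> \<gamma> \<in> {1..r l} \<and> \<alpha> \<in> {1..r (l - 1)}}
   \<union> {(L, 1, y, \<alpha>) | y \<alpha>. y \<in> {1..Y} \<and> \<alpha> \<in> {1..r (L - 1)}}"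

definition continuous_weight_dist :: "'i set \<Rightarrow> ('i \<Rightarrow> real) measure \<Rightarrow> bool" where
  "continuous_weight_dist I P \<longleftrightarrow> prob_space P \<and> sets P = sets (PiM I (\<lambda>_. lborel))
     \<and> absolutely_continuous (PiM I (\<lambda>_. lborel)) P"

end

theory Submission
  imports Defs "HOL-Computational_Algebra.Polynomial" "Jordan_Normal_Form.Determinant"
begin

inductive_set polyf :: "'i set \<Rightarrow> (('i \<Rightarrow> real) \<Rightarrow> real) set" for I where
  pconst: "(\<lambda>w. c) \<in> polyf I"
| pvar: "i \<in> I \<Longrightarrow> (\<lambda>w. w i) \<in> polyf I"
| padd: "p \<in> polyf I \<Longrightarrow> q \<in> polyf I \<Longrightarrow> (\<lambda>w. p w + q w) \<in> polyf I"
| pmult: "p \<in> polyf I \<Longrightarrow> q \<in> polyf I \<Longrightarrow> (\<lambda>w. p w * q w) \<in> polyf I"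

lemma polyf_sum:
  assumes "finite S" "\<And>s. s \<in> S \<Longrightarrow> f s \<in> polyf I"
  shows "(\<lambda>w. \<Sum>s\<in>S. f s w) \<in> polyf I"
  using assms by (induction S rule: finite_induct) (auto intro: polyf.intros)

lemma polyf_prod:
  assumes "finite S" "\<And>s. s \<in> S \<Longrightarrow> f s \<in> polyf I"
  shows "(\<lambda>w. \<Prod>s\<in>S. f s w) \<in> polyf I"
  using assms by (induction S rule: finite_induct) (auto intro: polyf.intros)

lemma polyf_local:
  assumes "p \<in> polyf I" "\<And>i. i \<in> I \<Longrightarrow> w i = v i"
  shows "p w = p v"
  using assms by (induction rule: polyf.induct) auto

lemma polyf_meas:
  assumes "p \<in> polyf I"
  shows "p \<in> borel_measurable (PiM I (\<lambda>_. lborel))"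
  using assms by (induction rule: polyf.induct) auto

lemma sum_list_product_mult:
  fixes g h :: "'b \<Rightarrow> real"
  shows "sum_list (map g xs) * sum_list (map h ys) =
         sum_list (map (\<lambda>ab. g (fst ab) * h (snd ab)) (List.product xs ys))"
  by (induction xs) (auto simp: algebra_simps sum_list_const_mult o_def)

lemma polyf_split:
  assumes "p \<in> polyf (insert i J)"
  shows "\<exists>cs. (\<forall>ce\<in>set cs. fst ce \<in> polyf J) \<and>
             (\<forall>w. p w = (\<Sum>ce\<leftarrow>cs. fst ce w * (w i) ^ snd ce))"
  using assms
proof (induction rule: polyf.induct)
  case (pconst c)
  show ?case by (rule exI[of _ "[(\<lambda>w. c, 0)]"]) (auto intro: polyf.intros)
next
  case (pvar j)
  show ?case
  proof (cases "j = i")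
    case True
    then show ?thesis by (intro exI[of _ "[(\<lambda>w. 1, 1)]"]) (auto intro: polyf.intros)
  next
    case False
    then show ?thesis using pvar by (intro exI[of _ "[(\<lambda>w. w j, 0)]"]) (auto intro: polyf.intros)
  qed
next
  case (padd p q)
  then obtain cs ds where "\<forall>ce\<in>set cs. fst ce \<in> polyf J" "\<forall>w. p w = (\<Sum>ce\<leftarrow>cs. fst ce w * (w i) ^ snd ce)"
    "\<forall>ce\<in>set ds. fst ce \<in> polyf J" "\<forall>w. q w = (\<Sum>ce\<leftarrow>ds. fst ce w * (w i) ^ snd ce)" by blast
  then show ?case by (intro exI[of _ "cs @ ds"]) auto
next
  case (pmult p q)
  then obtain cs ds where c1: "\<forall>ce\<in>set cs. fst ce \<in> polyf J" and c2: "\<forall>w. p w = (\<Sum>ce\<leftarrow>cs. fst ce w * (w i) ^ snd ce)"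
    and d1: "\<forall>ce\<in>set ds. fst ce \<in> polyf J" and d2: "\<forall>w. q w = (\<Sum>ce\<leftarrow>ds. fst ce w * (w i) ^ snd ce)" by blast
  let ?es = "map (\<lambda>ab. (\<lambda>w. fst (fst ab) w * fst (snd ab) w, snd (fst ab) + snd (snd ab))) (List.product cs ds)"
  have "\<forall>ce\<in>set ?es. fst ce \<in> polyf J" using c1 d1 by (auto intro: polyf.intros)
  moreover have "\<forall>w. p w * q w = (\<Sum>ce\<leftarrow>?es. fst ce w * (w i) ^ snd ce)"
  proof
    fix w
    have "p w * q w = (\<Sum>ce\<leftarrow>cs. fst ce w * (w i) ^ snd ce) * (\<Sum>ce\<leftarrow>ds. fst ce w * (w i) ^ snd ce)"
      using c2 d2 by simp
    also have "\<dots> = (\<Sum>ce\<leftarrow>?es. fst ce w * (w i) ^ snd ce)"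
      unfolding sum_list_product_mult by (simp add: o_def power_add algebra_simps)
    finally show "p w * q w = (\<Sum>ce\<leftarrow>?es. fst ce w * (w i) ^ snd ce)" .
  qed
  ultimately show ?case by blast
qed

lemma poly_sum_list_map: "poly (sum_list (map g xs)) y = sum_list (map (\<lambda>x. poly (g x) y) xs)"
  by (induction xs) auto

lemma coeff_sum_list_map: "coeff (sum_list (map g xs)) j = sum_list (map (\<lambda>x. coeff (g x) j) xs)"
  by (induction xs) auto

lemma polyf_sum_list:
  assumes "\<And>x. x \<in> set xs \<Longrightarrow> g x \<in> polyf I"
  shows "(\<lambda>w. sum_list (map (\<lambda>x. g x w) xs)) \<in> polyf I"
  using assms by (induction xs) (auto intro: polyf.intros)

lemma lborel_psf: "product_sigma_finite (\<lambda>_::'i. lborel::real measure)"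
  by (simp add: product_sigma_finite_def lborel.sigma_finite_measure_axioms)

lemma polyf_null:
  assumes "finite I" "p \<in> polyf I" "p w0 \<noteq> 0"
  shows "{w \<in> space (PiM I (\<lambda>_. lborel::real measure)). p w = 0} \<in> null_sets (PiM I (\<lambda>_. lborel))"
  using assms
proof (induction I arbitrary: p w0 rule: finite_induct)
  case empty
  have ne: "p w \<noteq> 0" for w using polyf_local[OF empty(1), of w w0] empty(2) by auto
  have e: "{w \<in> space (PiM {} (\<lambda>_. lborel::real measure)). p w = 0} = {}" using ne by auto
  show ?case unfolding e by simp
next
  case (insert i J)
  interpret product_sigma_finite "\<lambda>_::'a. lborel::real measure" by (rule lborel_psf)
  obtain cs where cs1: "\<forall>ce\<in>set cs. fst ce \<in> polyf J"
    and cs2: "\<forall>w. p w = (\<Sum>ce\<leftarrow>cs. fst ce w * (w i) ^ snd ce)"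
    using polyf_split[OF insert(4)] by blast
  define P where "P x = (\<Sum>ce\<leftarrow>cs. monom (fst ce x) (snd ce))" for x
  define C where "C j x = (\<Sum>ce\<leftarrow>cs. (if snd ce = j then 1 else 0) * fst ce x)" for j x
  have pP: "p w = poly (P w) (w i)" for w
    unfolding P_def poly_sum_list_map using cs2 by (simp add: poly_monom)
  have cP: "coeff (P x) j = C j x" for x j
    unfolding P_def C_def coeff_sum_list_map by (intro arg_cong[where f=sum_list] map_cong) (auto simp: coeff_monom)
  have Cpoly: "C j \<in> polyf J" for j
    unfolding C_def by (rule polyf_sum_list) (use cs1 in \<open>auto intro: polyf.intros\<close>)
  have "P w0 \<noteq> 0" using insert(5) pP by auto
  then obtain j where j: "C j w0 \<noteq> 0" using cP by (metis coeff_0 poly_eqI)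
  have nullJ: "{x \<in> space (PiM J (\<lambda>_. lborel::real measure)). C j x = 0} \<in> null_sets (PiM J (\<lambda>_. lborel))"
    by (rule insert(3)[OF Cpoly j])
  let ?S = "{w \<in> space (PiM (insert i J) (\<lambda>_. lborel::real measure)). p w = 0}"
  have pm: "p \<in> borel_measurable (PiM (insert i J) (\<lambda>_. lborel))" by (rule polyf_meas[OF insert(4)])
  have Sm: "?S \<in> sets (PiM (insert i J) (\<lambda>_. lborel))" using pm by measurable
  have "emeasure (PiM (insert i J) (\<lambda>_. lborel)) ?S = (\<integral>\<^sup>+ w. indicator ?S w \<partial>PiM (insert i J) (\<lambda>_. lborel))"
    using Sm by simp
  also have "\<dots> = (\<integral>\<^sup>+ x. (\<integral>\<^sup>+ y. indicator ?S (x(i := y)) \<partial>lborel) \<partial>PiM J (\<lambda>_. lborel))"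
    by (rule product_nn_integral_insert) (use insert Sm in auto)
  also have "\<dots> = (\<integral>\<^sup>+ x. 0 \<partial>PiM J (\<lambda>_. lborel::real measure))"
  proof -
    have "AE x in PiM J (\<lambda>_. lborel). C j x \<noteq> 0"
      by (rule AE_I'[OF nullJ]) auto
    then have "AE x in PiM J (\<lambda>_. lborel). (\<integral>\<^sup>+ y. indicator ?S (x(i := y)) \<partial>lborel) = 0"
    proof eventually_elim
      case (elim x)
      have Cx: "C n (x(i:=y)) = C n x" for n y
        by (rule polyf_local[OF Cpoly]) (use insert(2) in auto)
      define Q where "Q = P (x(i:=0))"
      have "Q \<noteq> 0" unfolding Q_def using elim Cx cP by (metis coeff_0)
      then have fin: "finite {y. poly Q y = 0}" by (rule poly_roots_finite)
      have PP: "P (x(i:=y)) = Q" for y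
        unfolding Q_def by (rule poly_eqI) (simp add: cP Cx)
      have "(\<integral>\<^sup>+ y. indicator ?S (x(i := y)) \<partial>lborel) \<le> (\<integral>\<^sup>+ y. indicator {y. poly Q y = 0} y \<partial>lborel)"
        by (rule nn_integral_mono) (auto simp: indicator_def pP PP)
      also have "\<dots> = 0" using finite_imp_null_set_lborel[OF fin] by (subst nn_integral_indicator) (auto simp: null_sets_def)
      finally show ?case by simp
    qed
    then show ?thesis by (rule Nonnegative_Lebesgue_Integration.nn_integral_cong_AE)
  qed
  also have "\<dots> = 0" by simp
  finally show ?case using Sm by (simp add: null_sets_def)
qed

lemma lborel_psf': "product_sigma_finite (\<lambda>_::nat. lborel::'a::euclidean_space measure)"
  by (simp add: product_sigma_finite_def lborel.sigma_finite_measure_axioms)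

lemma int_fg:
  fixes g h :: "'a::euclidean_space \<Rightarrow> real"
  assumes "is_L2 g" "is_L2 h"
  shows "integrable lborel (\<lambda>x. g x * h x)"
proof -
  have i1: "integrable lborel (\<lambda>x. (g x)^2 + (h x)^2)" using assms unfolding is_L2_def by auto
  have m1: "(\<lambda>x. g x * h x) \<in> borel_measurable lborel" using assms unfolding is_L2_def by auto
  have "\<bar>g x * h x\<bar> \<le> (g x)^2 + (h x)^2" for x
  proof -
    have a: "2 * \<bar>g x\<bar> * \<bar>h x\<bar> \<le> \<bar>g x\<bar>^2 + \<bar>h x\<bar>^2" by (rule sum_squares_bound)
    have b: "0 \<le> \<bar>g x\<bar> * \<bar>h x\<bar>" by simp
    from a have c: "2 * (\<bar>g x\<bar> * \<bar>h x\<bar>) \<le> (g x)^2 + (h x)^2" by (simp add: power2_abs mult.assoc)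
    show ?thesis unfolding abs_mult using b c by linarith
  qed
  then have ae: "AE x in lborel. norm (g x * h x) \<le> norm ((g x)^2 + (h x)^2)" by auto
  show ?thesis using Bochner_Integration.integrable_bound[OF i1 m1 ae] .
qed

lemma prod_int:
  fixes G :: "nat \<Rightarrow> 'a::euclidean_space \<Rightarrow> real"
  assumes "finite S" "\<And>i. i \<in> S \<Longrightarrow> integrable lborel (G i)"
  shows "integrable (PiM S (\<lambda>_. lborel)) (\<lambda>x. \<Prod>i\<in>S. G i (x i))"
    and "integral\<^sup>L (PiM S (\<lambda>_. lborel)) (\<lambda>x. \<Prod>i\<in>S. G i (x i)) = (\<Prod>i\<in>S. integral\<^sup>L lborel (G i))"
proof -
  interpret product_sigma_finite "\<lambda>_::nat. lborel::'a measure" by (rule lborel_psf')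
  show "integrable (PiM S (\<lambda>_. lborel)) (\<lambda>x. \<Prod>i\<in>S. G i (x i))"
    by (rule product_integrable_prod) (use assms in auto)
  show "integral\<^sup>L (PiM S (\<lambda>_. lborel)) (\<lambda>x. \<Prod>i\<in>S. G i (x i)) = (\<Prod>i\<in>S. integral\<^sup>L lborel (G i))"
    by (rule product_integral_prod) (use assms in auto)
qed

lemma prod_indic:
  fixes P :: "nat \<Rightarrow> bool"
  assumes "finite S"
  shows "(\<Prod>i\<in>S. (if P i then 1 else 0::real)) = (if \<forall>i\<in>S. P i then 1 else 0)"
  using assms by (induction S rule: finite_induct) auto

lemma PiE_eq_iff_on:
  assumes "d \<in> PiE S B" "d' \<in> PiE S B"
  shows "(\<forall>i\<in>S. d' i = d i) \<longleftrightarrow> d' = d"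
  using assms by (auto simp: PiE_def extensional_def fun_eq_iff)

lemma tensor_fn_meas:
  fixes f :: "nat \<Rightarrow> 'a::euclidean_space \<Rightarrow> real"
  assumes "\<forall>d\<in>{1..M}. is_L2 (f d)"
  shows "tensor_fn f M N C \<in> borel_measurable (PiM {1..N} (\<lambda>_. lborel))"
  unfolding tensor_fn_def
proof (intro borel_measurable_sum borel_measurable_times borel_measurable_const borel_measurable_prod)
  fix d i assume d: "d \<in> PiE {1..N} (\<lambda>_. {1..M})" and i: "i \<in> {1..N}"
  then have "d i \<in> {1..M}" by auto
  then have "f (d i) \<in> borel_measurable lborel" using assms unfolding is_L2_def by auto
  then show "(\<lambda>x. f (d i) (x i)) \<in> borel_measurable (PiM {1..N} (\<lambda>_. lborel))"
    using i by (intro measurable_compose[OF measurable_component_singleton]) auto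
qed

lemma tensor_sq:
  fixes f :: "nat \<Rightarrow> 'a::euclidean_space \<Rightarrow> real"
  assumes "\<forall>d\<in>{1..M}. is_L2 (f d)"
  shows "integrable (PiM {1..N} (\<lambda>_. lborel)) (\<lambda>x. (tensor_fn f M N C x)^2)"
proof -
  let ?D = "PiE {1..N} (\<lambda>_. {1..M})"
  have eq: "(tensor_fn f M N C x)^2 = (\<Sum>d\<in>?D. \<Sum>d'\<in>?D. C d * C d' * (\<Prod>i\<in>{1..N}. f (d i) (x i) * f (d' i) (x i)))" for x
    unfolding tensor_fn_def power2_eq_square sum_product prod.distrib by (simp add: algebra_simps)
  have trm: "integrable (PiM {1..N} (\<lambda>_. lborel)) (\<lambda>x. C d * C d' * (\<Prod>i\<in>{1..N}. f (d i) (x i) * f (d' i) (x i)))"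
    if "d \<in> ?D" "d' \<in> ?D" for d d'
  proof -
    have "integrable lborel (\<lambda>x. f (d i) x * f (d' i) x)" if "i \<in> {1..N}" for i
    proof -
      have "d i \<in> {1..M}" "d' i \<in> {1..M}" using that \<open>d \<in> ?D\<close> \<open>d' \<in> ?D\<close> by auto
      then show ?thesis using assms by (intro int_fg) auto
    qed
    then have "integrable (PiM {1..N} (\<lambda>_. lborel)) (\<lambda>x. \<Prod>i\<in>{1..N}. f (d i) (x i) * f (d' i) (x i))"
      using prod_int(1)[of "{1..N}" "\<lambda>i x. f (d i) x * f (d' i) x"] by auto
    then show ?thesis by (rule Bochner_Integration.integrable_mult_right)
  qed
  show ?thesis unfolding eq by (intro Bochner_Integration.integrable_sum trm)
qed

lemma coeff_extract:
  fixes f u :: "nat \<Rightarrow> 'a::euclidean_space \<Rightarrow> real"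
  assumes uf: "\<forall>k\<in>{1..M}. \<forall>d\<in>{1..M}. integrable lborel (\<lambda>x. f d x * u k x) \<and>
                 integral\<^sup>L lborel (\<lambda>x. f d x * u k x) = (if d = k then 1 else 0)"
    and d: "d \<in> PiE {1..N} (\<lambda>_. {1..M})"
  shows "integrable (PiM {1..N} (\<lambda>_. lborel)) (\<lambda>x. tensor_fn f M N C x * (\<Prod>i\<in>{1..N}. u (d i) (x i)))"
    and "integral\<^sup>L (PiM {1..N} (\<lambda>_. lborel)) (\<lambda>x. tensor_fn f M N C x * (\<Prod>i\<in>{1..N}. u (d i) (x i))) = C d"
proof -
  let ?D = "PiE {1..N} (\<lambda>_. {1..M})"
  have eq: "tensor_fn f M N C x * (\<Prod>i\<in>{1..N}. u (d i) (x i)) =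
      (\<Sum>d'\<in>?D. C d' * (\<Prod>i\<in>{1..N}. f (d' i) (x i) * u (d i) (x i)))" for x
    unfolding tensor_fn_def sum_distrib_right prod.distrib by (simp add: algebra_simps)
  have ints: "integrable lborel (\<lambda>x. f (d' i) x * u (d i) x)" if "d' \<in> ?D" "i \<in> {1..N}" for d' i
  proof -
    have "d' i \<in> {1..M}" "d i \<in> {1..M}" using that d by auto
    then show ?thesis using uf by blast
  qed
  have tint: "integrable (PiM {1..N} (\<lambda>_. lborel)) (\<lambda>x. \<Prod>i\<in>{1..N}. f (d' i) (x i) * u (d i) (x i))"
    and tval: "integral\<^sup>L (PiM {1..N} (\<lambda>_. lborel)) (\<lambda>x. \<Prod>i\<in>{1..N}. f (d' i) (x i) * u (d i) (x i))
       = (\<Prod>i\<in>{1..N}. integral\<^sup>L lborel (\<lambda>x. f (d' i) x * u (d i) x))"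
    if "d' \<in> ?D" for d'
    using prod_int[of "{1..N}" "\<lambda>i x. f (d' i) x * u (d i) x"] ints[OF that] by auto
  show "integrable (PiM {1..N} (\<lambda>_. lborel)) (\<lambda>x. tensor_fn f M N C x * (\<Prod>i\<in>{1..N}. u (d i) (x i)))"
    unfolding eq by (intro Bochner_Integration.integrable_sum Bochner_Integration.integrable_mult_right tint)
  have "integral\<^sup>L (PiM {1..N} (\<lambda>_. lborel)) (\<lambda>x. tensor_fn f M N C x * (\<Prod>i\<in>{1..N}. u (d i) (x i)))
      = (\<Sum>d'\<in>?D. C d' * (\<Prod>i\<in>{1..N}. integral\<^sup>L lborel (\<lambda>x. f (d' i) x * u (d i) x)))"
    unfolding eq
  proof -
    have "integral\<^sup>L (PiM {1..N} (\<lambda>_. lborel)) (\<lambda>x. \<Sum>d'\<in>?D. C d' * (\<Prod>i\<in>{1..N}. f (d' i) (x i) * u (d i) (x i)))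
        = (\<Sum>d'\<in>?D. integral\<^sup>L (PiM {1..N} (\<lambda>_. lborel)) (\<lambda>x. C d' * (\<Prod>i\<in>{1..N}. f (d' i) (x i) * u (d i) (x i))))"
      by (intro Bochner_Integration.integral_sum Bochner_Integration.integrable_mult_right tint)
    also have "\<dots> = (\<Sum>d'\<in>?D. C d' * (\<Prod>i\<in>{1..N}. integral\<^sup>L lborel (\<lambda>x. f (d' i) x * u (d i) x)))"
    proof (rule sum.cong[OF refl])
      fix d' assume "d' \<in> ?D"
      show "integral\<^sup>L (PiM {1..N} (\<lambda>_. lborel)) (\<lambda>x. C d' * (\<Prod>i\<in>{1..N}. f (d' i) (x i) * u (d i) (x i)))
         = C d' * (\<Prod>i\<in>{1..N}. integral\<^sup>L lborel (\<lambda>x. f (d' i) x * u (d i) x))"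
        unfolding integral_mult_right_zero tval[OF \<open>d' \<in> ?D\<close>] ..
    qed
    finally show "integral\<^sup>L (PiM {1..N} (\<lambda>_. lborel)) (\<lambda>x. \<Sum>d'\<in>?D. C d' * (\<Prod>i\<in>{1..N}. f (d' i) (x i) * u (d i) (x i)))
      = (\<Sum>d'\<in>?D. C d' * (\<Prod>i\<in>{1..N}. integral\<^sup>L lborel (\<lambda>x. f (d' i) x * u (d i) x)))" .
  qed
  also have "\<dots> = (\<Sum>d'\<in>?D. C d' * (if d' = d then 1 else 0))"
  proof (rule sum.cong[OF refl])
    fix d' assume d': "d' \<in> ?D"
    have "(\<Prod>i\<in>{1..N}. integral\<^sup>L lborel (\<lambda>x. f (d' i) x * u (d i) x)) = (\<Prod>i\<in>{1..N}. if d' i = d i then 1 else 0)"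
    proof (rule prod.cong[OF refl])
      fix i assume i: "i \<in> {1..N}"
      have "d i \<in> {1..M}" "d' i \<in> {1..M}" using d d' i by auto
      then show "integral\<^sup>L lborel (\<lambda>x. f (d' i) x * u (d i) x) = (if d' i = d i then 1 else 0)" using uf by auto
    qed
    also have "\<dots> = (if d' = d then 1 else 0)"
      using PiE_eq_iff_on[OF d d'] by (auto simp: prod_indic)
    finally show "C d' * (\<Prod>i\<in>{1..N}. integral\<^sup>L lborel (\<lambda>x. f (d' i) x * u (d i) x)) = C d' * (if d' = d then 1 else 0)"
      by simp
  qed
  also have "\<dots> = C d" using d by (simp add: if_distrib sum.delta finite_PiE cong: if_cong)
  finally show "integral\<^sup>L (PiM {1..N} (\<lambda>_. lborel)) (\<lambda>x. tensor_fn f M N C x * (\<Prod>i\<in>{1..N}. u (d i) (x i))) = C d" .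
qed

lemma amgm:
  fixes a b t :: real
  assumes "t > 0"
  shows "\<bar>a * b\<bar> \<le> (t * a^2 + b^2 / t) / 2"
proof -
  have "0 \<le> (t*\<bar>a\<bar> - \<bar>b\<bar>)^2" by simp
  then have h: "2*t*(\<bar>a\<bar>*\<bar>b\<bar>) \<le> t^2*a^2 + b^2"
    by (simp add: power2_diff power_mult_distrib power2_abs algebra_simps)
  have "\<bar>a * b\<bar> = (2*t*(\<bar>a\<bar>*\<bar>b\<bar>)) / (2*t)" using assms by (simp add: abs_mult)
  also have "\<dots> \<le> (t^2*a^2 + b^2) / (2*t)" using h assms by (intro divide_right_mono) auto
  also have "\<dots> = (t * a^2 + b^2 / t) / 2" using assms by (simp add: field_simps power2_eq_square)
  finally show ?thesis .
qed

lemma entry_small: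
  fixes f u :: "nat \<Rightarrow> 'a::euclidean_space \<Rightarrow> real"
  assumes L2: "\<forall>d\<in>{1..M}. is_L2 (f d)"
    and uf: "\<forall>k\<in>{1..M}. \<forall>d\<in>{1..M}. integrable lborel (\<lambda>x. f d x * u k x) \<and>
                 integral\<^sup>L lborel (\<lambda>x. f d x * u k x) = (if d = k then 1 else 0)"
    and uu: "\<forall>k\<in>{1..M}. integrable lborel (\<lambda>x. u k x * u k x)"
    and d: "d \<in> PiE {1..N} (\<lambda>_. {1..M})"
    and eta: "\<eta> > 0"
  shows "\<exists>\<delta>>0. \<forall>C. (\<integral>\<^sup>+ x. ennreal ((tensor_fn f M N C x)^2) \<partial>(PiM {1..N} (\<lambda>_. lborel))) \<le> ennreal \<delta> \<longrightarrow> \<bar>C d\<bar> \<le> \<eta>"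
proof -
  let ?P = "PiM {1..N} (\<lambda>_. lborel::'a measure)"
  define U where "U x = (\<Prod>i\<in>{1..N}. u (d i) (x i))" for x :: "nat \<Rightarrow> 'a"
  have UU: "U x * U x = (\<Prod>i\<in>{1..N}. u (d i) (x i) * u (d i) (x i))" for x
    unfolding U_def prod.distrib ..
  have Uint: "integrable ?P (\<lambda>x. U x * U x)"
    unfolding UU
  proof (rule prod_int(1)[of "{1..N}" "\<lambda>i x. u (d i) x * u (d i) x"])
    fix i assume "i \<in> {1..N}"
    then have "d i \<in> {1..M}" using d by auto
    then show "integrable lborel (\<lambda>x. u (d i) x * u (d i) x)" using uu by auto
  qed auto
  define K where "K = integral\<^sup>L ?P (\<lambda>x. U x * U x)"
  have K0: "K \<ge> 0" unfolding K_def by (rule integral_nonneg_AE) auto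
  define t where "t = (K + 1) / \<eta>"
  have t0: "t > 0" unfolding t_def using K0 eta by auto
  define \<delta> where "\<delta> = \<eta> / t"
  have d0: "\<delta> > 0" unfolding \<delta>_def using t0 eta by auto
  show ?thesis
  proof (intro exI[of _ \<delta>] conjI allI impI d0)
    fix C assume hC: "(\<integral>\<^sup>+ x. ennreal ((tensor_fn f M N C x)^2) \<partial>?P) \<le> ennreal \<delta>"
    let ?g = "tensor_fn f M N C"
    have gint: "integrable ?P (\<lambda>x. (?g x)^2)" by (rule tensor_sq[OF L2])
    have "(\<integral>\<^sup>+ x. ennreal ((?g x)^2) \<partial>?P) = ennreal (integral\<^sup>L ?P (\<lambda>x. (?g x)^2))"
      by (rule nn_integral_eq_integral[OF gint]) auto
    with hC have G: "integral\<^sup>L ?P (\<lambda>x. (?g x)^2) \<le> \<delta>" using d0 by simp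
    have gU: "integrable ?P (\<lambda>x. ?g x * U x)" and Cd: "integral\<^sup>L ?P (\<lambda>x. ?g x * U x) = C d"
      using coeff_extract[OF uf d, of C] unfolding U_def by auto
    have Bint: "integrable ?P (\<lambda>x. (t * (?g x)^2 + (U x * U x) / t) / 2)"
      using gint Uint by auto
    have "\<bar>C d\<bar> = norm (integral\<^sup>L ?P (\<lambda>x. ?g x * U x))" using Cd by simp
    also have "\<dots> \<le> integral\<^sup>L ?P (\<lambda>x. norm (?g x * U x))" by (rule integral_norm_bound)
    also have "\<dots> \<le> integral\<^sup>L ?P (\<lambda>x. (t * (?g x)^2 + (U x * U x) / t) / 2)"
    proof (rule Bochner_Integration.integral_mono)
      show "integrable ?P (\<lambda>x. norm (?g x * U x))" using gU by auto
      show "integrable ?P (\<lambda>x. (t * (?g x)^2 + (U x * U x) / t) / 2)" by (rule Bint)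
      fix x show "norm (?g x * U x) \<le> (t * (?g x)^2 + (U x * U x) / t) / 2"
        using amgm[OF t0, of "?g x" "U x"] by (simp add: power2_eq_square)
    qed
    also have "\<dots> = (t * integral\<^sup>L ?P (\<lambda>x. (?g x)^2) + K / t) / 2"
      using gint Uint unfolding K_def by simp
    also have "\<dots> \<le> (t * \<delta> + K / t) / 2"
      using G t0 by (intro divide_right_mono add_right_mono mult_left_mono) auto
    also have "\<dots> \<le> \<eta>"
    proof -
      have "t * \<delta> = \<eta>" unfolding \<delta>_def using t0 by simp
      moreover have "K / t \<le> \<eta>"
        unfolding t_def using K0 eta by (simp add: field_simps)
      ultimately show ?thesis by simp
    qed
    finally show "\<bar>C d\<bar> \<le> \<eta>" .
  qed
qed

lemma sum_1M: "(\<Sum>d\<in>{1..M}. g d) = (\<Sum>j<M. g (Suc j))"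
  using sum.atLeast1_atMost_eq[of g M] by simp

lemma duals:
  fixes f :: "nat \<Rightarrow> 'a::euclidean_space \<Rightarrow> real"
  assumes L2: "\<forall>d\<in>{1..M}. is_L2 (f d)" and li: "L2_lin_indep f M"
  shows "\<exists>u. (\<forall>k\<in>{1..M}. integrable lborel (\<lambda>x. u k x * u k x)) \<and>
             (\<forall>k\<in>{1..M}. \<forall>d\<in>{1..M}. integrable lborel (\<lambda>x. f d x * u k x) \<and>
                 integral\<^sup>L lborel (\<lambda>x. f d x * u k x) = (if d = k then 1 else 0))"
proof -
  define g where "g a b = integral\<^sup>L lborel (\<lambda>x. f a x * f b x)" for a b
  have fint: "integrable lborel (\<lambda>x. f a x * f b x)" if "a \<in> {1..M}" "b \<in> {1..M}" for a b
    using that L2 by (intro int_fg) auto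
  have fint': "integrable lborel (\<lambda>x. f (Suc a) x * f (Suc b) x)" if "a < M" "b < M" for a b
    using fint[of "Suc a" "Suc b"] that by auto
  define G where "G = mat M M (\<lambda>(i,j). g (Suc i) (Suc j))"
  have Gc: "G \<in> carrier_mat M M" unfolding G_def by simp
  have "Determinant.det G \<noteq> 0"
  proof
    assume "Determinant.det G = 0"
    then obtain v where v: "v \<in> carrier_vec M" "v \<noteq> 0\<^sub>v M" "G *\<^sub>v v = 0\<^sub>v M"
      using det_0_iff_vec_prod_zero[OF Gc] by auto
    define S where "S x = (\<Sum>j<M. v $ j * f (Suc j) x)" for x
    have SS: "S x * S x = (\<Sum>a<M. \<Sum>b<M. v $ a * v $ b * (f (Suc a) x * f (Suc b) x))" for x
      unfolding S_def sum_product by (simp add: algebra_simps)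
    have Sint: "integrable lborel (\<lambda>x. S x * S x)"
      unfolding SS by (intro Bochner_Integration.integrable_sum Bochner_Integration.integrable_mult_right fint') auto
    have "integral\<^sup>L lborel (\<lambda>x. S x * S x) = (\<Sum>a<M. \<Sum>b<M. v $ a * v $ b * g (Suc a) (Suc b))"
      unfolding SS g_def
      by (subst Bochner_Integration.integral_sum, intro Bochner_Integration.integrable_sum Bochner_Integration.integrable_mult_right fint', auto)
        (intro sum.cong refl, subst Bochner_Integration.integral_sum, auto intro!: Bochner_Integration.integrable_mult_right fint')
    also have "\<dots> = (\<Sum>a<M. v $ a * (G *\<^sub>v v) $ a)"
    proof (rule sum.cong[OF refl])
      fix a assume a: "a \<in> {..<M}"
      have "(G *\<^sub>v v) $ a = (\<Sum>b\<in>{0..<M}. G $$ (a, b) * v $ b)"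
        using a v(1) Gc by (simp add: scalar_prod_def)
      also have "\<dots> = (\<Sum>b<M. g (Suc a) (Suc b) * v $ b)"
        using a unfolding G_def by (intro sum.cong) auto
      finally show "(\<Sum>b<M. v $ a * v $ b * g (Suc a) (Suc b)) = v $ a * (G *\<^sub>v v) $ a"
        by (simp add: sum_distrib_left algebra_simps)
    qed
    also have "\<dots> = 0" using v(3) by simp
    finally have "integral\<^sup>L lborel (\<lambda>x. S x * S x) = 0" .
    then have "AE x in lborel. S x * S x = 0"
      using integral_nonneg_eq_0_iff_AE[OF Sint] by auto
    then have ae: "AE x in lborel. (\<Sum>d\<in>{1..M}. (v $ (d - 1)) * f d x) = 0"
      by eventually_elim (simp add: S_def sum.atLeast1_atMost_eq)
    have "\<forall>d\<in>{1..M}. v $ (d - 1) = 0"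
      using spec[OF li[unfolded L2_lin_indep_def], of "\<lambda>d. v $ (d - 1)"] ae by blast
    then have "v = 0\<^sub>v M"
      using v(1) by (intro eq_vecI) (auto, metis One_nat_def Suc_leI atLeastAtMost_iff diff_Suc_1 le_add1 plus_1_eq_Suc zero_less_Suc add_le_cancel_left Suc_le_eq)
    then show False using v(2) by simp
  qed
  then have "G \<in> Units (ring_mat TYPE(real) M ())"
    by (rule det_non_zero_imp_unit[OF Gc])
  then obtain H where H: "H \<in> carrier_mat M M" "G * H = 1\<^sub>m M"
    unfolding Units_def ring_mat_def by auto
  define u where "u k x = (\<Sum>j<M. H $$ (j, k - 1) * f (Suc j) x)" for k x
  have uu: "u k x * u k x = (\<Sum>a<M. \<Sum>b<M. H $$ (a, k - 1) * H $$ (b, k - 1) * (f (Suc a) x * f (Suc b) x))" for k x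
    unfolding u_def sum_product by (simp add: algebra_simps)
  have fu: "f d x * u k x = (\<Sum>j<M. H $$ (j, k - 1) * (f d x * f (Suc j) x))" for d k x
    unfolding u_def sum_distrib_left by (simp add: algebra_simps)
  show ?thesis
  proof (intro exI[of _ u] conjI ballI)
    fix k assume k: "k \<in> {1..M}"
    show "integrable lborel (\<lambda>x. u k x * u k x)"
      unfolding uu by (intro Bochner_Integration.integrable_sum Bochner_Integration.integrable_mult_right fint') auto
    fix d assume d: "d \<in> {1..M}"
    have fint'': "integrable lborel (\<lambda>x. f d x * f (Suc j) x)" if "j < M" for j
      using fint[of d "Suc j"] d that by auto
    show "integrable lborel (\<lambda>x. f d x * u k x)"
      unfolding fu by (intro Bochner_Integration.integrable_sum Bochner_Integration.integrable_mult_right fint'') auto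
    have "integral\<^sup>L lborel (\<lambda>x. f d x * u k x) = (\<Sum>j<M. H $$ (j, k - 1) * g d (Suc j))"
      unfolding fu g_def
      by (subst Bochner_Integration.integral_sum) (auto intro!: Bochner_Integration.integrable_mult_right fint'')
    also have "\<dots> = (\<Sum>j\<in>{0..<M}. G $$ (d - 1, j) * H $$ (j, k - 1))"
      unfolding G_def using d by (intro sum.cong) auto
    also have "\<dots> = (G * H) $$ (d - 1, k - 1)"
      using d k H(1) Gc by (auto simp: scalar_prod_def intro!: sum.cong)
    also have "\<dots> = (if d = k then 1 else 0)"
      using H(2) d k by auto
    finally show "integral\<^sup>L lborel (\<lambda>x. f d x * u k x) = (if d = k then 1 else 0)" .
  qed
qed

definition ilv :: "nat \<Rightarrow> (nat \<Rightarrow> nat) \<Rightarrow> (nat \<Rightarrow> nat) \<Rightarrow> (nat \<Rightarrow> nat)" where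
  "ilv N p q = (\<lambda>k. if k \<in> {1..N} then (if odd k then p ((k+1) div 2) else q (k div 2)) else undefined)"

definition tmat :: "nat \<Rightarrow> (nat \<Rightarrow> (nat \<Rightarrow> nat)) \<Rightarrow> nat \<Rightarrow> tensor \<Rightarrow> real mat" where
  "tmat R e N T = mat R R (\<lambda>(i,j). T (ilv N (e i) (e j)))"

definition cpT :: "nat \<Rightarrow> nat \<Rightarrow> (nat \<Rightarrow> real) \<Rightarrow> (nat \<Rightarrow> nat \<Rightarrow> nat \<Rightarrow> real) \<Rightarrow> tensor" where
  "cpT N Z a b = (\<lambda>d. \<Sum>z\<in>{1..Z}. a z * (\<Prod>i\<in>{1..N}. b z i (d i)))"

lemma ilv_in:
  assumes "p \<in> PiE {1..n} (\<lambda>_. {1..m})" "q \<in> PiE {1..n} (\<lambda>_. {1..m})" "m \<le> M" "N = 2*n"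
  shows "ilv N p q \<in> PiE {1..N} (\<lambda>_. {1..M})"
proof -
  have "ilv N p q k \<in> {1..M}" if k: "k \<in> {1..N}" for k
  proof (cases "odd k")
    case True
    then have "(k+1) div 2 \<in> {1..n}" using k assms(4) by (auto elim!: oddE)
    then have "p ((k+1) div 2) \<in> {1..m}" by (rule PiE_mem[OF assms(1)])
    then show ?thesis using True k assms(3) unfolding ilv_def by auto
  next
    case False
    then have "k div 2 \<in> {1..n}" using k assms(4) by auto
    then have "q (k div 2) \<in> {1..m}" by (rule PiE_mem[OF assms(2)])
    then show ?thesis using False k assms(3) unfolding ilv_def by auto
  qed
  then show ?thesis unfolding ilv_def by (auto simp: PiE_def extensional_def)
qed

lemma ilv_odd: "l \<in> {1..n} \<Longrightarrow> N = 2*n \<Longrightarrow> ilv N p q (2*l - 1) = p l"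
  unfolding ilv_def by auto

lemma ilv_even: "l \<in> {1..n} \<Longrightarrow> N = 2*n \<Longrightarrow> ilv N p q (2*l) = q l"
  unfolding ilv_def by auto

lemma prod_split:
  fixes n :: nat and h :: "nat \<Rightarrow> 'b::comm_monoid_mult"
  shows "(\<Prod>k\<in>{1..2*n}. h k) = (\<Prod>l\<in>{1..n}. h (2*l - 1) * h (2*l))"
proof (induction n)
  case 0
  then show ?case by simp
next
  case (Suc n)
  have "{1..2 * Suc n} = insert (2*n+2) (insert (2*n+1) {1..2*n})" by auto
  then have "(\<Prod>k\<in>{1..2*Suc n}. h k) = h (2*n+2) * (h (2*n+1) * (\<Prod>k\<in>{1..2*n}. h k))" by simp
  also have "\<dots> = (\<Prod>l\<in>{1..n}. h (2*l - 1) * h (2*l)) * (h (2*Suc n - 1) * h (2*Suc n))"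
    using Suc by (simp add: ac_simps)
  also have "\<dots> = (\<Prod>l\<in>{1..Suc n}. h (2*l - 1) * h (2*l))"
    by (simp add: atLeastAtMostSuc_conv ac_simps)
  finally show ?case .
qed

lemma cp_is_tensor:
  "cp_fn f M N Z a b x = tensor_fn f M N (cpT N Z a b) x"
proof -
  let ?D = "PiE {1..N} (\<lambda>_. {1..M})"
  have "cp_fn f M N Z a b x = (\<Sum>z\<in>{1..Z}. a z * (\<Sum>d\<in>?D. \<Prod>i\<in>{1..N}. b z i (d i) * f (d i) (x i)))"
    unfolding cp_fn_def by (simp add: prod_sum_PiE)
  also have "\<dots> = (\<Sum>z\<in>{1..Z}. \<Sum>d\<in>?D. a z * (\<Prod>i\<in>{1..N}. b z i (d i)) * (\<Prod>i\<in>{1..N}. f (d i) (x i)))"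
    by (simp add: sum_distrib_left prod.distrib mult.assoc)
  also have "\<dots> = (\<Sum>d\<in>?D. \<Sum>z\<in>{1..Z}. a z * (\<Prod>i\<in>{1..N}. b z i (d i)) * (\<Prod>i\<in>{1..N}. f (d i) (x i)))"
    by (rule sum.swap)
  also have "\<dots> = tensor_fn f M N (cpT N Z a b) x"
    unfolding tensor_fn_def cpT_def by (simp add: sum_distrib_right)
  finally show ?thesis .
qed

lemma tensor_fn_diff:
  "tensor_fn f M N (\<lambda>d. T d - A d) x = tensor_fn f M N T x - tensor_fn f M N A x"
  unfolding tensor_fn_def by (simp add: left_diff_distrib sum_subtractf)

lemma det_rowzero:
  assumes "V \<in> carrier_mat R R" "k < R" "\<And>j. j < R \<Longrightarrow> V $$ (k, j) = 0"
  shows "Determinant.det V = 0"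
proof -
  have "(\<Prod>i = 0..<R. V $$ (i, p i)) = 0" if "p permutes {0..<R}" for p
  proof (rule prod_zero)
    have "p k < R" using that assms(2) permutes_in_image by fastforce
    then show "\<exists>i\<in>{0..<R}. V $$ (i, p i) = 0" using assms(2,3) by (intro bexI[of _ k]) auto
  qed auto
  then show ?thesis unfolding det_def'[OF assms(1)] by simp
qed

lemma cp_det0:
  assumes "Z < R" "N = 2*n"
  shows "Determinant.det (tmat R e N (cpT N Z a b)) = 0"
proof -
  define P1 where "P1 z i = (\<Prod>l\<in>{1..n}. b z (2*l - 1) (e i l))" for z i
  define P2 where "P2 z j = (\<Prod>l\<in>{1..n}. b z (2*l) (e j l))" for z j
  define U where "U = mat R R (\<lambda>(i,z). if z < Z then a (Suc z) * P1 (Suc z) i else 0)"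
  define V where "V = mat R R (\<lambda>(z,j). if z < Z then P2 (Suc z) j else 0)"
  have Uc: "U \<in> carrier_mat R R" and Vc: "V \<in> carrier_mat R R" unfolding U_def V_def by auto
  have entry: "cpT N Z a b (ilv N p q) = (\<Sum>z<Z. a (Suc z) * (\<Prod>l\<in>{1..n}. b (Suc z) (2*l - 1) (p l)) * (\<Prod>l\<in>{1..n}. b (Suc z) (2*l) (q l)))"
    for p q
  proof -
    have "(\<Prod>i\<in>{1..N}. b z i (ilv N p q i)) = (\<Prod>l\<in>{1..n}. b z (2*l - 1) (p l)) * (\<Prod>l\<in>{1..n}. b z (2*l) (q l))" for z
    proof -
      have "(\<Prod>i\<in>{1..N}. b z i (ilv N p q i)) = (\<Prod>l\<in>{1..n}. b z (2*l - 1) (ilv N p q (2*l - 1)) * b z (2*l) (ilv N p q (2*l)))"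
        using prod_split[of "\<lambda>i. b z i (ilv N p q i)" n] assms(2) by simp
      also have "\<dots> = (\<Prod>l\<in>{1..n}. b z (2*l - 1) (p l) * b z (2*l) (q l))"
      proof (rule prod.cong[OF refl])
        fix l assume l: "l \<in> {1..n}"
        show "b z (2*l - 1) (ilv N p q (2*l - 1)) * b z (2*l) (ilv N p q (2*l)) = b z (2*l - 1) (p l) * b z (2*l) (q l)"
          unfolding ilv_odd[OF l assms(2)] ilv_even[OF l assms(2)] ..
      qed
      finally show ?thesis by (simp add: prod.distrib)
    qed
    then show ?thesis unfolding cpT_def by (simp add: sum.atLeast1_atMost_eq mult.assoc)
  qed
  have "tmat R e N (cpT N Z a b) = U * V"
  proof (rule eq_matI)
    fix i j assume ij: "i < dim_row (U * V)" "j < dim_col (U * V)"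
    then have i: "i < R" and j: "j < R" using Uc Vc by auto
    have "(U * V) $$ (i, j) = (\<Sum>z\<in>{0..<R}. U $$ (i, z) * V $$ (z, j))"
      using i j Uc Vc by (simp add: scalar_prod_def)
    also have "\<dots> = (\<Sum>z\<in>{0..<R}. if z < Z then a (Suc z) * P1 (Suc z) i * P2 (Suc z) j else 0)"
      using i j unfolding U_def V_def by (intro sum.cong) auto
    also have "\<dots> = (\<Sum>z\<in>{0..<Z}. a (Suc z) * P1 (Suc z) i * P2 (Suc z) j)"
    proof -
      have "{0..<Z} \<subseteq> {0..<R}" using assms(1) by auto
      then show ?thesis by (subst sum.mono_neutral_right[of "{0..<R}" "{0..<Z}"]) auto
    qed
    also have "\<dots> = tmat R e N (cpT N Z a b) $$ (i, j)"
      using i j unfolding tmat_def entry P1_def P2_def by (simp add: atLeast0LessThan)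
    finally show "tmat R e N (cpT N Z a b) $$ (i, j) = (U * V) $$ (i, j)" by simp
  qed (use Uc Vc in \<open>auto simp: tmat_def\<close>)
  moreover have "Determinant.det V = 0"
    by (rule det_rowzero[OF Vc assms(1)]) (use assms(1) in \<open>auto simp: V_def\<close>)
  ultimately show ?thesis using det_mult[OF Uc Vc] by simp
qed

lemma det_cont:
  assumes "\<And>i j. i < R \<Longrightarrow> j < R \<Longrightarrow> (\<lambda>k. T k (ilv N (e i) (e j))) \<longlonglongrightarrow> A (ilv N (e i) (e j))"
  shows "(\<lambda>k. Determinant.det (tmat R e N (T k))) \<longlonglongrightarrow> Determinant.det (tmat R e N A)"
proof -
  have c: "tmat R e N X \<in> carrier_mat R R" for X unfolding tmat_def by simp
  have ent: "tmat R e N X $$ (i, p i) = X (ilv N (e i) (e (p i)))" if "p permutes {0..<R}" "i \<in> {0..<R}" for X p i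
  proof -
    have "p i < R" using that permutes_in_image by fastforce
    then show ?thesis using that unfolding tmat_def by simp
  qed
  show ?thesis
    unfolding det_def'[OF c]
  proof (intro tendsto_sum tendsto_mult_left tendsto_prod)
    fix p i assume p: "p \<in> {p. p permutes {0..<R}}" and i: "i \<in> {0..<R}"
    have "p i < R" using p i permutes_in_image by fastforce
    then show "(\<lambda>k. tmat R e N (T k) $$ (i, p i)) \<longlonglongrightarrow> tmat R e N A $$ (i, p i)"
      unfolding ent[OF p[simplified] i] using assms i by auto
  qed
qed

lemma core:
  fixes f :: "nat \<Rightarrow> 'a::euclidean_space \<Rightarrow> real"
  assumes L2: "\<forall>d\<in>{1..M}. is_L2 (f d)" and li: "L2_lin_indep f M"
    and N: "N = 2*n" and mM: "m \<le> M" and e: "\<forall>i<m^n. e i \<in> PiE {1..n} (\<lambda>_. {1..m})"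
    and det: "Determinant.det (tmat (m^n) e N A) \<noteq> 0"
  shows "not_CP_approximable f M N (tensor_fn f M N A) (m^n)"
proof (rule ccontr)
  let ?R = "m^n"
  let ?P = "PiM {1..N} (\<lambda>_. lborel::'a measure)"
  let ?D = "PiE {1..N} (\<lambda>_. {1..M})"
  assume "\<not> not_CP_approximable f M N (tensor_fn f M N A) ?R"
  then have H: "\<forall>\<epsilon>>0. \<exists>Z<?R. \<exists>a b. (\<integral>\<^sup>+ x. ennreal ((cp_fn f M N Z a b x - tensor_fn f M N A x)^2) \<partial>?P) \<le> ennreal \<epsilon>"
    unfolding not_CP_approximable_def by (auto simp: not_less) (meson not_le)
  let ?Q = "\<lambda>(k::nat) (t :: nat \<times> (nat \<Rightarrow> real) \<times> (nat \<Rightarrow> nat \<Rightarrow> nat \<Rightarrow> real)). fst t < ?R \<and>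
     (\<integral>\<^sup>+ x. ennreal ((cp_fn f M N (fst t) (fst (snd t)) (snd (snd t)) x - tensor_fn f M N A x)^2) \<partial>?P) \<le> ennreal (1 / Suc k)"
  have "\<forall>k. \<exists>t. ?Q k t"
  proof
    fix k :: nat
    have "(1 / Suc k :: real) > 0" by simp
    from H[rule_format, OF this] obtain Z a b where z1: "Z < ?R" and
      z2: "(\<integral>\<^sup>+ x. ennreal ((cp_fn f M N Z a b x - tensor_fn f M N A x)^2) \<partial>?P) \<le> ennreal (1 / Suc k)"
      by blast
    have "?Q k (Z, a, b)" unfolding fst_conv snd_conv using z1 z2 by (rule conjI)
    then show "\<exists>t. ?Q k t" by (rule exI[of _ "(Z,a,b)"])
  qed
  then obtain g where g: "\<forall>k. ?Q k (g k)" by (rule choice[THEN exE])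
  define Zs where "Zs k = fst (g k)" for k
  define as where "as k = fst (snd (g k))" for k
  define bs where "bs k = snd (snd (g k))" for k
  have S: "\<And>k. Zs k < ?R"
    "\<And>k. (\<integral>\<^sup>+ x. ennreal ((cp_fn f M N (Zs k) (as k) (bs k) x - tensor_fn f M N A x)^2) \<partial>?P) \<le> ennreal (1 / Suc k)"
    using g unfolding Zs_def as_def bs_def by (simp_all only: case_prod_beta)
  define T where "T k = cpT N (Zs k) (as k) (bs k)" for k
  define C where "C k = (\<lambda>d. T k d - A d)" for k
  have CS: "(\<integral>\<^sup>+ x. ennreal ((tensor_fn f M N (C k) x)^2) \<partial>?P) \<le> ennreal (1 / Suc k)" for k
    using S(2)[of k] unfolding C_def tensor_fn_diff T_def cp_is_tensor .
  obtain u where uu: "\<forall>k\<in>{1..M}. integrable lborel (\<lambda>x. u k x * u k x)"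
    and uf: "\<forall>k\<in>{1..M}. \<forall>d\<in>{1..M}. integrable lborel (\<lambda>x. f d x * u k x) \<and>
                 integral\<^sup>L lborel (\<lambda>x. f d x * u k x) = (if d = k then 1 else 0)"
    using duals[OF L2 li] by blast
  have Cconv: "(\<lambda>k. C k d) \<longlonglongrightarrow> 0" if d: "d \<in> ?D" for d
  proof (rule LIMSEQ_I)
    fix r :: real assume r: "r > 0"
    obtain \<delta> where \<delta>: "\<delta> > 0" "\<forall>C. (\<integral>\<^sup>+ x. ennreal ((tensor_fn f M N C x)^2) \<partial>?P) \<le> ennreal \<delta> \<longrightarrow> \<bar>C d\<bar> \<le> r/2"
      using entry_small[OF L2 uf uu d, of "r/2"] r by (meson half_gt_zero)
    obtain no where no: "inverse (real (Suc no)) < \<delta>" using reals_Archimedean[OF \<delta>(1)] by auto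
    show "\<exists>no. \<forall>k\<ge>no. norm (C k d - 0) < r"
    proof (intro exI[of _ no] allI impI)
      fix k assume k: "k \<ge> no"
      have "1 / real (Suc k) \<le> inverse (real (Suc no))"
        using k by (simp add: divide_simps)
      then have "ennreal (1 / Suc k) \<le> ennreal \<delta>" using no by (intro ennreal_leI) simp
      then have "(\<integral>\<^sup>+ x. ennreal ((tensor_fn f M N (C k) x)^2) \<partial>?P) \<le> ennreal \<delta>" using CS[of k] by (rule order_trans[rotated])
      then have "\<bar>C k d\<bar> \<le> r/2" using \<delta>(2) by (rule_tac mp[OF spec[OF \<delta>(2)]])
      then show "norm (C k d - 0) < r" using r by simp
    qed
  qed
  have "(\<lambda>k. Determinant.det (tmat ?R e N (T k))) \<longlonglongrightarrow> Determinant.det (tmat ?R e N A)"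
  proof (rule det_cont)
    fix i j assume "i < ?R" "j < ?R"
    then have "ilv N (e i) (e j) \<in> ?D" using e mM N by (intro ilv_in) auto
    then have "(\<lambda>k. C k (ilv N (e i) (e j)) + A (ilv N (e i) (e j))) \<longlonglongrightarrow> 0 + A (ilv N (e i) (e j))"
      by (intro tendsto_add Cconv tendsto_const)
    then show "(\<lambda>k. T k (ilv N (e i) (e j))) \<longlonglongrightarrow> A (ilv N (e i) (e j))"
      unfolding C_def by simp
  qed
  moreover have "Determinant.det (tmat ?R e N (T k)) = 0" for k
    unfolding T_def by (rule cp_det0[OF S(1) N])
  ultimately have "(\<lambda>k. 0) \<longlonglongrightarrow> Determinant.det (tmat ?R e N A)" by simp
  then have "0 = Determinant.det (tmat ?R e N A)" by (rule LIMSEQ_unique[OF tendsto_const])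
  then show False using det by argo
qed

lemma phi_poly:
  assumes "\<And>l j \<gamma> \<alpha>. (\<lambda>w. Wf w l j \<gamma> \<alpha>) \<in> polyf UNIV"
  shows "(\<lambda>w. ht_phi (Wf w) r l j \<gamma> d) \<in> polyf UNIV"
proof (induction l arbitrary: j \<gamma> d)
  case 0
  then show ?case using assms by simp
next
  case (Suc l)
  show ?case
    unfolding ht_phi.simps tensor_prod_def
    by (intro polyf_sum pmult assms Suc) simp
qed

lemma det_poly:
  assumes "\<And>d. (\<lambda>w. T w d) \<in> polyf UNIV"
  shows "(\<lambda>w. Determinant.det (tmat R e N (T w))) \<in> polyf UNIV"
proof -
  have c: "tmat R e N X \<in> carrier_mat R R" for X unfolding tmat_def by simp
  have ent: "tmat R e N X $$ (i, p i) = X (ilv N (e i) (e (p i)))" if "p permutes {0..<R}" "i \<in> {0..<R}" for X p i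
  proof -
    have "p i < R" using that permutes_in_image by fastforce
    then show ?thesis using that unfolding tmat_def by simp
  qed
  have eq: "Determinant.det (tmat R e N (T w)) = (\<Sum>p\<in>{p. p permutes {0..<R}}. signof p * (\<Prod>i = 0..<R. T w (ilv N (e i) (e (p i)))))" for w
    unfolding det_def'[OF c] by (intro sum.cong refl arg_cong2[where f="(*)"] prod.cong) (auto simp: ent)
  show ?thesis unfolding eq
    by (intro polyf_sum pmult pconst polyf_prod assms) (auto simp: finite_permutations)
qed

lemma polyf_restrict:
  assumes "p \<in> polyf UNIV"
  shows "(\<lambda>w. p (\<lambda>i. if i \<in> I then w i else undefined)) \<in> polyf I"
  using assms
proof (induction rule: polyf.induct)
  case (pvar i)
  show ?case
  proof (cases "i \<in> I")
    case True
    then show ?thesis by (simp add: polyf.pvar)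
  next
    case False
    then show ?thesis by (simp add: polyf.pconst)
  qed
qed (auto intro: polyf.intros)

definition W0 :: "nat \<Rightarrow> nat \<Rightarrow> nat \<Rightarrow> nat \<Rightarrow> real" where
  "W0 l j \<gamma> \<alpha> = (if l = 0 then (if \<alpha> = \<gamma> then 1 else 0) else if l = 1 then 1 else (if \<alpha> = 1 then 1 else 0))"

definition EE :: "nat \<Rightarrow> nat \<Rightarrow> nat \<Rightarrow> real" where
  "EE r0 a b = (if a = b \<and> a \<le> r0 then 1 else 0)"

lemma prod_add:
  fixes g :: "nat \<Rightarrow> 'b::comm_monoid_mult"
  shows "(\<Prod>i\<in>{1..a+b}. g i) = (\<Prod>i\<in>{1..a}. g i) * (\<Prod>i\<in>{1..b}. g (a+i))"
proof (induction b)
  case 0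
  then show ?case by simp
next
  case (Suc b)
  have "(\<Prod>i\<in>{1..a + Suc b}. g i) = g (a + Suc b) * (\<Prod>i\<in>{1..a+b}. g i)"
    by (simp add: atLeastAtMostSuc_conv)
  also have "\<dots> = (\<Prod>i\<in>{1..a}. g i) * (g (a + Suc b) * (\<Prod>i\<in>{1..b}. g (a+i)))"
    using Suc by (simp add: ac_simps)
  also have "\<dots> = (\<Prod>i\<in>{1..a}. g i) * (\<Prod>i\<in>{1..Suc b}. g (a+i))"
    by (simp add: atLeastAtMostSuc_conv ac_simps)
  finally show ?case .
qed

lemma sum_indic1:
  fixes g :: "nat \<Rightarrow> real"
  assumes "finite S" "a \<in> S"
  shows "(\<Sum>x\<in>S. (if x = a then 1 else 0) * g x) = g a"
proof -
  have "(\<Sum>x\<in>S. (if x = a then 1 else 0) * g x) = (\<Sum>x\<in>S. if x = a then g x else 0)"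
    by (intro sum.cong refl) auto
  also have "\<dots> = g a" using assms by (simp add: sum.delta)
  finally show ?thesis .
qed

lemma witness_phi:
  fixes W :: "nat \<Rightarrow> nat \<Rightarrow> nat \<Rightarrow> nat \<Rightarrow> real"
  assumes rpos: "\<forall>l<L. r l > 0"
    and H0: "\<forall>j\<in>{1..2^L}. \<forall>\<gamma>\<in>{1..r 0}. \<forall>a\<in>{1..M}. W 0 j \<gamma> a = (if a = \<gamma> then 1 else 0)"
    and H: "\<forall>l j \<gamma> \<alpha>. 1 \<le> l \<and> l \<le> L \<and> j \<in> {1..2^(L-l)} \<and> \<gamma> \<in> (if l < L then {1..r l} else {1..Y})
              \<and> \<alpha> \<in> {1..r (l-1)} \<longrightarrow> W l j \<gamma> \<alpha> = W0 l j \<gamma> \<alpha>"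
  shows "Suc k \<le> L \<Longrightarrow> j \<in> {1..2^(L - Suc k)} \<Longrightarrow> \<gamma> \<in> (if Suc k < L then {1..r (Suc k)} else {1..Y})
     \<Longrightarrow> (\<forall>i\<in>{1..2^Suc k}. d i \<in> {1..M})
     \<Longrightarrow> ht_phi W r (Suc k) j \<gamma> d = (\<Prod>i\<in>{1..2^k}. EE (r 0) (d (2*i - 1)) (d (2*i)))"
proof (induction k arbitrary: j \<gamma> d)
  case 0
  have j: "2*j \<le> 2^L" using 0(1,2) by (cases L) auto
  have j1: "j \<ge> 1" using 0(2) by auto
  have d1: "d 1 \<in> {1..M}" and d2: "d 2 \<in> {1..M}" using 0(4) by auto
  have "ht_phi W r (Suc 0) j \<gamma> d = (\<Sum>\<alpha>\<in>{1..r 0}. W 1 j \<gamma> \<alpha> * (W 0 (2*j - 1) \<alpha> (d 1) * W 0 (2*j) \<alpha> (d 2)))"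
    by (simp add: tensor_prod_def numeral_2_eq_2)
  also have "\<dots> = (\<Sum>\<alpha>\<in>{1..r 0}. (if d 1 = \<alpha> then 1 else 0) * (if d 2 = \<alpha> then 1 else 0))"
  proof (rule sum.cong[OF refl])
    fix \<alpha> assume a: "\<alpha> \<in> {1..r 0}"
    have "W 1 j \<gamma> \<alpha> = W0 1 j \<gamma> \<alpha>" using H[rule_format, of "Suc 0" j \<gamma> \<alpha>] 0(1,2,3) a by simp
    moreover have "W 0 (2*j - 1) \<alpha> (d 1) = (if d 1 = \<alpha> then 1 else 0)"
      by (rule H0[rule_format, OF _ a d1]) (use j j1 in auto)
    moreover have "W 0 (2*j) \<alpha> (d 2) = (if d 2 = \<alpha> then 1 else 0)"
      by (rule H0[rule_format, OF _ a d2]) (use j j1 in auto)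
    ultimately show "W 1 j \<gamma> \<alpha> * (W 0 (2*j - 1) \<alpha> (d 1) * W 0 (2*j) \<alpha> (d 2)) =
        (if d 1 = \<alpha> then 1 else 0) * (if d 2 = \<alpha> then 1 else 0)" by (simp add: W0_def)
  qed
  also have "\<dots> = (\<Sum>\<alpha>\<in>{1..r 0}. if \<alpha> = d 1 then (if d 1 = d 2 then 1 else 0) else 0)"
    by (intro sum.cong refl) auto
  also have "\<dots> = (if d 1 \<in> {1..r 0} then (if d 1 = d 2 then 1 else 0) else 0)"
    by (rule sum.delta) simp
  also have "\<dots> = EE (r 0) (d 1) (d 2)"
    using d1 unfolding EE_def by auto
  finally show ?case by simp
next
  case (Suc k)
  have kL: "Suc k < L" using Suc(2) by simp
  have rk: "1 \<in> {1..r (Suc k)}" using rpos kL by auto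
  have pw: "(2::nat)^(L - Suc k) = 2 * 2^(L - Suc (Suc k))" using kL
    by (metis Suc_diff_Suc power_Suc)
  have j1: "2*j - 1 \<in> {1..2^(L - Suc k)}" "2*j \<in> {1..2^(L - Suc k)}" using Suc(3) pw by auto
  have g1: "1 \<in> (if Suc k < L then {1..r (Suc k)} else {1..Y})" using kL rk by simp
  have dA: "\<forall>i\<in>{1..2^Suc k}. d i \<in> {1..M}" using Suc(5) by auto
  have dB: "\<forall>i\<in>{1..2^Suc k}. d (2^Suc k + i) \<in> {1..M}" using Suc(5) by auto
  have "ht_phi W r (Suc (Suc k)) j \<gamma> d = (\<Sum>\<alpha>\<in>{1..r (Suc k)}. W (Suc (Suc k)) j \<gamma> \<alpha> *
      (ht_phi W r (Suc k) (2*j - 1) \<alpha> d * ht_phi W r (Suc k) (2*j) \<alpha> (\<lambda>i. d (2^Suc k + i))))"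
    by (simp add: tensor_prod_def)
  also have "\<dots> = (\<Sum>\<alpha>\<in>{1..r (Suc k)}. (if \<alpha> = 1 then 1 else 0) *
      (ht_phi W r (Suc k) (2*j - 1) \<alpha> d * ht_phi W r (Suc k) (2*j) \<alpha> (\<lambda>i. d (2^Suc k + i))))"
  proof (rule sum.cong[OF refl])
    fix \<alpha> assume a: "\<alpha> \<in> {1..r (Suc k)}"
    have "W (Suc (Suc k)) j \<gamma> \<alpha> = W0 (Suc (Suc k)) j \<gamma> \<alpha>" using H[rule_format, of "Suc (Suc k)" j \<gamma> \<alpha>] Suc(2,3,4) a by simp
    then show "W (Suc (Suc k)) j \<gamma> \<alpha> * (ht_phi W r (Suc k) (2*j - 1) \<alpha> d * ht_phi W r (Suc k) (2*j) \<alpha> (\<lambda>i. d (2^Suc k + i))) =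
      (if \<alpha> = 1 then 1 else 0) * (ht_phi W r (Suc k) (2*j - 1) \<alpha> d * ht_phi W r (Suc k) (2*j) \<alpha> (\<lambda>i. d (2^Suc k + i)))"
      by (simp add: W0_def)
  qed
  also have "\<dots> = ht_phi W r (Suc k) (2*j - 1) 1 d * ht_phi W r (Suc k) (2*j) 1 (\<lambda>i. d (2^Suc k + i))"
    by (rule sum_indic1[OF _ rk]) simp
  also have "\<dots> = (\<Prod>i\<in>{1..2^k}. EE (r 0) (d (2*i - 1)) (d (2*i))) *
      (\<Prod>i\<in>{1..2^k}. EE (r 0) (d (2^Suc k + (2*i - 1))) (d (2^Suc k + 2*i)))"
    using Suc.IH[OF _ j1(1) g1 dA] Suc.IH[OF _ j1(2) g1 dB] kL by simp
  also have "\<dots> = (\<Prod>i\<in>{1..2^k + 2^k}. EE (r 0) (d (2*i - 1)) (d (2*i)))"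
  proof -
    have B: "(\<Prod>i\<in>{1..2^k}. EE (r 0) (d (2^Suc k + (2*i - 1))) (d (2^Suc k + 2*i))) =
          (\<Prod>i\<in>{1..2^k}. EE (r 0) (d (2*(2^k + i) - 1)) (d (2*(2^k + i))))"
      by (intro prod.cong refl) (auto simp: algebra_simps)
    show ?thesis
      by (simp only: B) (rule prod_add[of "\<lambda>i. EE (r 0) (d (2*i - 1)) (d (2*i))" "2^k" "2^k", symmetric])
  qed
  also have "\<dots> = (\<Prod>i\<in>{1..2^Suc k}. EE (r 0) (d (2*i - 1)) (d (2*i)))"
    by (simp add: mult_2)
  finally show ?case .
qed

lemma top_identity:
  fixes W :: "nat \<Rightarrow> nat \<Rightarrow> nat \<Rightarrow> nat \<Rightarrow> real"
  assumes L: "L \<ge> 1" and N: "N = 2^L" and n: "n = 2^(L-1)" and m: "m = min (r 0) M"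
    and rpos: "\<forall>l<L. r l > 0"
    and H0: "\<forall>j\<in>{1..2^L}. \<forall>\<gamma>\<in>{1..r 0}. \<forall>a\<in>{1..M}. W 0 j \<gamma> a = (if a = \<gamma> then 1 else 0)"
    and H: "\<forall>l j \<gamma> \<alpha>. 1 \<le> l \<and> l \<le> L \<and> j \<in> {1..2^(L-l)} \<and> \<gamma> \<in> (if l < L then {1..r l} else {1..Y})
              \<and> \<alpha> \<in> {1..r (l-1)} \<longrightarrow> W l j \<gamma> \<alpha> = W0 l j \<gamma> \<alpha>"
    and e: "\<forall>i<m^n. e i \<in> PiE {1..n} (\<lambda>_. {1..m})" and einj: "inj_on e {0..<m^n}"
    and y: "y \<in> {1..Y}"
  shows "Determinant.det (tmat (m^n) e N (ht_phi W r L 1 y)) = 1"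
proof -
  let ?R = "m^n"
  have N2: "N = 2*n" using N n L by (cases L) auto
  have mM: "m \<le> M" using m by simp
  have "tmat ?R e N (ht_phi W r L 1 y) = 1\<^sub>m ?R"
  proof (rule eq_matI)
    fix i j assume "i < dim_row (1\<^sub>m ?R)" "j < dim_col (1\<^sub>m ?R)"
    then have i: "i < ?R" and j: "j < ?R" by auto
    let ?d = "ilv N (e i) (e j)"
    have dD: "?d \<in> PiE {1..N} (\<lambda>_. {1..M})" using ilv_in[OF _ _ mM N2] e i j by auto
    have Lk: "Suc (L - 1) = L" using L by simp
    have "ht_phi W r L 1 y ?d = ht_phi W r (Suc (L-1)) 1 y ?d" using Lk by simp
    also have "\<dots> = (\<Prod>l\<in>{1..2^(L-1)}. EE (r 0) (?d (2*l - 1)) (?d (2*l)))"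
    proof (rule witness_phi[OF rpos H0 H])
      show "Suc (L - 1) \<le> L" using L by simp
      show "(1::nat) \<in> {1..2^(L - Suc (L - 1))}" by simp
      show "y \<in> (if Suc (L - 1) < L then {1..r (Suc (L - 1))} else {1..Y})" using y Lk by simp
      show "\<forall>i\<in>{1..2^Suc (L - 1)}. ?d i \<in> {1..M}" using dD Lk N by auto
    qed
    also have "\<dots> = (\<Prod>l\<in>{1..n}. EE (r 0) (e i l) (e j l))"
      unfolding n[symmetric]
    proof (rule prod.cong[OF refl])
      fix l assume l: "l \<in> {1..n}"
      show "EE (r 0) (?d (2*l - 1)) (?d (2*l)) = EE (r 0) (e i l) (e j l)"
        unfolding ilv_odd[OF l N2] ilv_even[OF l N2] ..
    qed
    also have "\<dots> = (if i = j then 1 else 0)"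
    proof (cases "i = j")
      case True
      have "EE (r 0) (e i l) (e i l) = 1" if "l \<in> {1..n}" for l
      proof -
        have "e i l \<in> {1..m}" using e i that by (intro PiE_mem[of "e i" "{1..n}"]) auto
        then show ?thesis using m unfolding EE_def by auto
      qed
      then show ?thesis using True by simp
    next
      case False
      then have "e i \<noteq> e j" using einj i j by (auto simp: inj_on_def)
      then obtain l where l: "e i l \<noteq> e j l" by auto
      have "l \<in> {1..n}"
      proof (rule ccontr)
        assume "l \<notin> {1..n}"
        then have "e i l = undefined" "e j l = undefined" using e i j by (auto simp: PiE_def extensional_def)
        then show False using l by simp
      qed
      moreover have "EE (r 0) (e i l) (e j l) = 0" using l unfolding EE_def by simp
      ultimately show ?thesis using False by (auto intro!: prod_zero)
    qed
    finally show "tmat ?R e N (ht_phi W r L 1 y) $$ (i, j) = 1\<^sub>m ?R $$ (i, j)"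
      using i j unfolding tmat_def by simp
  qed (auto simp: tmat_def)
  then show ?thesis by simp
qed

lemma main_ae:
  fixes f :: "nat \<Rightarrow> 'a::euclidean_space \<Rightarrow> real" and I :: "(nat \<times> nat \<times> nat \<times> nat) set"
    and Wf :: "((nat \<times> nat \<times> nat \<times> nat) \<Rightarrow> real) \<Rightarrow> nat \<Rightarrow> nat \<Rightarrow> nat \<Rightarrow> nat \<Rightarrow> real"
  assumes L2: "\<forall>d\<in>{1..M}. is_L2 (f d)" and li: "L2_lin_indep f M"
    and N: "N = 2*n" and mM: "m \<le> M" and e: "\<forall>i<m^n. e i \<in> PiE {1..n} (\<lambda>_. {1..m})"
    and fin: "finite I" and P: "continuous_weight_dist I P"
    and Wf: "\<And>l j \<gamma> \<alpha>. (\<lambda>w. Wf w l j \<gamma> \<alpha>) \<in> polyf UNIV"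
    and wit: "\<And>y. y \<in> {1..Y} \<Longrightarrow> \<exists>w1 \<in> PiE I (\<lambda>_. UNIV). Determinant.det (tmat (m^n) e N (ht_phi (Wf w1) r L 1 y)) \<noteq> 0"
  shows "AE w in P. \<forall>y\<in>{1..Y}. not_CP_approximable f M N (tensor_fn f M N (ht_phi (Wf w) r L 1 y)) (m^n)"
proof (rule eventually_ball_finite)
  show "finite {1..Y}" by simp
  show "\<forall>y\<in>{1..Y}. AE w in P. not_CP_approximable f M N (tensor_fn f M N (ht_phi (Wf w) r L 1 y)) (m^n)"
  proof
    fix y assume y: "y \<in> {1..Y}"
    define p where "p w = Determinant.det (tmat (m^n) e N (ht_phi (Wf w) r L 1 y))" for w
    have pp: "p \<in> polyf UNIV" unfolding p_def by (intro det_poly phi_poly Wf)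
    define q where "q w = p (\<lambda>i. if i \<in> I then w i else undefined)" for w
    have qp: "q \<in> polyf I" unfolding q_def by (rule polyf_restrict[OF pp])
    have ext: "(\<lambda>i. if i \<in> I then w i else undefined) = w" if "w \<in> PiE I (\<lambda>_. UNIV)" for w :: "nat \<times> nat \<times> nat \<times> nat \<Rightarrow> real"
      using that by (auto simp: PiE_def extensional_def fun_eq_iff)
    obtain w1 where w1: "w1 \<in> PiE I (\<lambda>_. UNIV)" "p w1 \<noteq> 0" using wit[OF y] unfolding p_def by blast
    have qw1: "q w1 \<noteq> 0" using w1 ext[OF w1(1)] by (simp add: q_def)
    have null: "{w \<in> space (PiM I (\<lambda>_. lborel::real measure)). q w = 0} \<in> null_sets (PiM I (\<lambda>_. lborel))"
      by (rule polyf_null[OF fin qp qw1])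
    have Pp: "sets P = sets (PiM I (\<lambda>_. lborel))" "absolutely_continuous (PiM I (\<lambda>_. lborel)) P"
      using P unfolding continuous_weight_dist_def by auto
    have null2: "{w \<in> space (PiM I (\<lambda>_. lborel::real measure)). q w = 0} \<in> null_sets P"
      using Pp(2) null unfolding absolutely_continuous_def by auto
    have sp: "space P = PiE I (\<lambda>_. UNIV)" using sets_eq_imp_space_eq[OF Pp(1)] by (simp add: space_PiM)
    show "AE w in P. not_CP_approximable f M N (tensor_fn f M N (ht_phi (Wf w) r L 1 y)) (m^n)"
    proof (rule AE_I'[OF null2])
      show "{w \<in> space P. \<not> not_CP_approximable f M N (tensor_fn f M N (ht_phi (Wf w) r L 1 y)) (m^n)}
          \<subseteq> {w \<in> space (PiM I (\<lambda>_. lborel::real measure)). q w = 0}"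
      proof
        fix w assume w: "w \<in> {w \<in> space P. \<not> not_CP_approximable f M N (tensor_fn f M N (ht_phi (Wf w) r L 1 y)) (m^n)}"
        then have wI: "w \<in> PiE I (\<lambda>_. UNIV)" using sp by auto
        have "q w = 0"
        proof (rule ccontr)
          assume "q w \<noteq> 0"
          then have "p w \<noteq> 0" using ext[OF wI] by (simp add: q_def)
          then have "not_CP_approximable f M N (tensor_fn f M N (ht_phi (Wf w) r L 1 y)) (m^n)"
            unfolding p_def by (rule core[OF L2 li N mM e])
          then show False using w by auto
        qed
        then show "w \<in> {w \<in> space (PiM I (\<lambda>_. lborel::real measure)). q w = 0}"
          using wI by (simp add: space_PiM)
      qed
    qed
  qed
qed

lemma r_le_sum:
  fixes r :: "nat \<Rightarrow> nat"
  assumes "l \<le> L" shows "r l \<le> (\<Sum>l'\<le>L. r l')"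
proof -
  have "(\<Sum>l'\<in>{l}. r l') \<le> (\<Sum>l'\<le>L. r l')" by (rule sum_mono2) (use assms in auto)
  then show ?thesis by simp
qed

lemma fin_idx: "finite (ht_idx M N L r Y)"
proof -
  define K where "K = M + Y + (\<Sum>l'\<le>L. r l')"
  have "ht_idx M N L r Y \<subseteq> {0..L} \<times> {0..max N 1} \<times> {0..K} \<times> {0..K}"
  proof
    fix x assume "x \<in> ht_idx M N L r Y"
    then consider (a) j \<gamma> d where "x = (0, j, \<gamma>, d)" "j \<in> {1..N}" "\<gamma> \<in> {1..r 0}" "d \<in> {1..M}"
      | (b) l j \<gamma> \<alpha> where "x = (l, j, \<gamma>, \<alpha>)" "1 \<le> l" "l < L" "j \<in> {1..N div 2^l}" "\<gamma> \<in> {1..r l}" "\<alpha> \<in> {1..r (l - 1)}"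
      | (c) y \<alpha> where "x = (L, 1, y, \<alpha>)" "y \<in> {1..Y}" "\<alpha> \<in> {1..r (L - 1)}"
      unfolding ht_idx_def by blast
    then show "x \<in> {0..L} \<times> {0..max N 1} \<times> {0..K} \<times> {0..K}"
    proof cases
      case a
      then show ?thesis using r_le_sum[of 0 L r] unfolding K_def by auto
    next
      case b
      have j1: "j \<le> N div 2^l" using b(4) by simp
      have "j \<le> N" using j1 div_le_dividend[of N "2^l"] by linarith
      moreover have "r l \<le> (\<Sum>l'\<le>L. r l')" "r (l - 1) \<le> (\<Sum>l'\<le>L. r l')"
        by (rule r_le_sum, use b in simp)+
      ultimately show ?thesis using b unfolding K_def by auto
    next
      case c
      then show ?thesis using r_le_sum[of "L - 1" L r] unfolding K_def by auto
    qed
  qed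
  then show ?thesis by (rule finite_subset) auto
qed

lemma fin_sidx: "finite (ht_shared_idx M L r Y)"
proof -
  define K where "K = M + Y + (\<Sum>l'\<le>L. r l')"
  have "ht_shared_idx M L r Y \<subseteq> {0..L} \<times> {0..1} \<times> {0..K} \<times> {0..K}"
  proof
    fix x assume "x \<in> ht_shared_idx M L r Y"
    then consider (a) \<gamma> d where "x = (0, 1, \<gamma>, d)" "\<gamma> \<in> {1..r 0}" "d \<in> {1..M}"
      | (b) l \<gamma> \<alpha> where "x = (l, 1, \<gamma>, \<alpha>)" "1 \<le> l" "l < L" "\<gamma> \<in> {1..r l}" "\<alpha> \<in> {1..r (l - 1)}"
      | (c) y \<alpha> where "x = (L, 1, y, \<alpha>)" "y \<in> {1..Y}" "\<alpha> \<in> {1..r (L - 1)}"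
      unfolding ht_shared_idx_def by blast
    then show "x \<in> {0..L} \<times> {0..1} \<times> {0..K} \<times> {0..K}"
    proof cases
      case a
      then show ?thesis using r_le_sum[of 0 L r] unfolding K_def by auto
    next
      case b
      have "r l \<le> (\<Sum>l'\<le>L. r l')" "r (l - 1) \<le> (\<Sum>l'\<le>L. r l')"
        by (rule r_le_sum, use b in simp)+
      then show ?thesis using b unfolding K_def by auto
    next
      case c
      then show ?thesis using r_le_sum[of "L - 1" L r] unfolding K_def by auto
    qed
  qed
  then show ?thesis by (rule finite_subset) auto
qed

theorem corollary1:
  fixes f :: "nat \<Rightarrow> 'a::euclidean_space \<Rightarrow> real"
    and M Y L N :: nat and r :: "nat \<Rightarrow> nat"
  assumes "L \<ge> 1" and "N = 2 ^ L"
    and "\<forall>l<L. r l > 0"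
    and "\<forall>d\<in>{1..M}. is_L2 (f d)"
    and "L2_lin_indep f M"
  shows "(\<forall>P. continuous_weight_dist (ht_idx M N L r Y) P \<longrightarrow>
            (AE w in P. \<forall>y\<in>{1..Y}. not_CP_approximable f M N
               (tensor_fn f M N (ht_phi (\<lambda>l j \<gamma> \<alpha>. w (l, j, \<gamma>, \<alpha>)) r L 1 y))
               (min (r 0) M ^ (N div 2))))
       \<and> (\<forall>P. continuous_weight_dist (ht_shared_idx M L r Y) P \<longrightarrow>
            (AE w in P. \<forall>y\<in>{1..Y}. not_CP_approximable f M N
               (tensor_fn f M N (ht_phi (\<lambda>l j \<gamma> \<alpha>. w (l, 1, \<gamma>, \<alpha>)) r L 1 y))
               (min (r 0) M ^ (N div 2))))"
proof -
  note L = assms(1) and Nd = assms(2) and rpos = assms(3) and L2 = assms(4) and li = assms(5)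
  define n where "n = (2::nat)^(L-1)"
  define m where "m = min (r 0) M"
  have N2: "N = 2*n" unfolding n_def Nd using L by (cases L) auto
  have Nn: "N div 2 = n" using N2 by simp
  have mM: "m \<le> M" unfolding m_def by simp
  have "finite (PiE {1..n} (\<lambda>_::nat. {1..m}))" by (simp add: finite_PiE)
  then obtain e where e: "bij_betw e {0..<card (PiE {1..n} (\<lambda>_::nat. {1..m}))} (PiE {1..n} (\<lambda>_. {1..m}))"
    using ex_bij_betw_nat_finite by blast
  have card: "card (PiE {1..n} (\<lambda>_::nat. {1..m})) = m^n" by (simp add: card_PiE)
  have emap: "\<forall>i<m^n. e i \<in> PiE {1..n} (\<lambda>_. {1..m})"
    using e unfolding card bij_betw_def by auto
  have einj: "inj_on e {0..<m^n}" using e unfolding card bij_betw_def by auto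
  define w0 where "w0 = (\<lambda>(l::nat, j::nat, \<gamma>::nat, \<alpha>::nat). W0 l j \<gamma> \<alpha>)"
  have pow: "N div 2^l = 2^(L-l)" if "l \<le> L" for l
    unfolding Nd using that by (simp add: power_diff)
  show ?thesis
  proof (intro conjI allI impI)
    fix P assume P: "continuous_weight_dist (ht_idx M N L r Y) P"
    let ?I = "ht_idx M N L r Y"
    have "AE w in P. \<forall>y\<in>{1..Y}. not_CP_approximable f M N
               (tensor_fn f M N (ht_phi (\<lambda>l j \<gamma> \<alpha>. w (l, j, \<gamma>, \<alpha>)) r L 1 y)) (m^n)"
    proof (rule main_ae[OF L2 li N2 mM emap fin_idx P])
      show "(\<lambda>w. w (l, j, \<gamma>, \<alpha>)) \<in> polyf UNIV" for l j \<gamma> \<alpha> by (rule pvar) simp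
      fix y assume y: "y \<in> {1..Y}"
      let ?w1 = "restrict w0 ?I"
      have H0: "\<forall>j\<in>{1..2^L}. \<forall>\<gamma>\<in>{1..r 0}. \<forall>a\<in>{1..M}. ?w1 (0, j, \<gamma>, a) = (if a = \<gamma> then 1 else 0)"
        unfolding Nd[symmetric] by (auto simp: ht_idx_def w0_def W0_def)
      have H: "\<forall>l j \<gamma> \<alpha>. 1 \<le> l \<and> l \<le> L \<and> j \<in> {1..2^(L-l)} \<and> \<gamma> \<in> (if l < L then {1..r l} else {1..Y})
              \<and> \<alpha> \<in> {1..r (l-1)} \<longrightarrow> ?w1 (l, j, \<gamma>, \<alpha>) = W0 l j \<gamma> \<alpha>"
      proof (intro allI impI)
        fix l j \<gamma> \<alpha> :: nat assume h: "1 \<le> l \<and> l \<le> L \<and> j \<in> {1..2^(L-l)} \<and> \<gamma> \<in> (if l < L then {1..r l} else {1..Y}) \<and> \<alpha> \<in> {1..r (l-1)}"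
        have "(l, j, \<gamma>, \<alpha>) \<in> ?I"
        proof (cases "l < L")
          case True
          then show ?thesis using h pow[of l] unfolding ht_idx_def by auto
        next
          case False
          then have "l = L" "j = 1" "\<gamma> \<in> {1..Y}" using h by auto
          then show ?thesis using h unfolding ht_idx_def by auto
        qed
        then show "?w1 (l, j, \<gamma>, \<alpha>) = W0 l j \<gamma> \<alpha>" by (simp add: w0_def)
      qed
      have d1: "Determinant.det (tmat (m^n) e N (ht_phi (\<lambda>l j \<gamma> \<alpha>. ?w1 (l, j, \<gamma>, \<alpha>)) r L 1 y)) = 1"
        by (rule top_identity[OF L Nd n_def m_def rpos H0 H emap einj y])
      have mem: "?w1 \<in> PiE ?I (\<lambda>_. UNIV)" by simp
      show "\<exists>w1 \<in> PiE ?I (\<lambda>_. UNIV). Determinant.det (tmat (m^n) e N (ht_phi (\<lambda>l j \<gamma> \<alpha>. w1 (l, j, \<gamma>, \<alpha>)) r L 1 y)) \<noteq> 0"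
      proof (rule bexI[where x="?w1"])
        show "Determinant.det (tmat (m^n) e N (ht_phi (\<lambda>l j \<gamma> \<alpha>. ?w1 (l, j, \<gamma>, \<alpha>)) r L 1 y)) \<noteq> 0"
          unfolding d1 by simp
      qed (rule mem)
    qed
    then show "AE w in P. \<forall>y\<in>{1..Y}. not_CP_approximable f M N
               (tensor_fn f M N (ht_phi (\<lambda>l j \<gamma> \<alpha>. w (l, j, \<gamma>, \<alpha>)) r L 1 y))
               (min (r 0) M ^ (N div 2))"
      unfolding Nn m_def .
  next
    fix P assume P: "continuous_weight_dist (ht_shared_idx M L r Y) P"
    let ?I = "ht_shared_idx M L r Y"
    have "AE w in P. \<forall>y\<in>{1..Y}. not_CP_approximable f M N
               (tensor_fn f M N (ht_phi (\<lambda>l j \<gamma> \<alpha>. w (l, 1, \<gamma>, \<alpha>)) r L 1 y)) (m^n)"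
    proof (rule main_ae[OF L2 li N2 mM emap fin_sidx P])
      show "(\<lambda>w. w (l, 1, \<gamma>, \<alpha>)) \<in> polyf UNIV" for l j \<gamma> \<alpha> by (rule pvar) simp
      fix y assume y: "y \<in> {1..Y}"
      let ?w1 = "restrict w0 ?I"
      have H0: "\<forall>j\<in>{1..2^L}. \<forall>\<gamma>\<in>{1..r 0}. \<forall>a\<in>{1..M}. ?w1 (0, 1, \<gamma>, a) = (if a = \<gamma> then 1 else 0)"
        by (auto simp: ht_shared_idx_def w0_def W0_def)
      have H: "\<forall>l j \<gamma> \<alpha>. 1 \<le> l \<and> l \<le> L \<and> j \<in> {1..2^(L-l)} \<and> \<gamma> \<in> (if l < L then {1..r l} else {1..Y})
              \<and> \<alpha> \<in> {1..r (l-1)} \<longrightarrow> ?w1 (l, 1, \<gamma>, \<alpha>) = W0 l j \<gamma> \<alpha>"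
      proof (intro allI impI)
        fix l j \<gamma> \<alpha> :: nat assume h: "1 \<le> l \<and> l \<le> L \<and> j \<in> {1..2^(L-l)} \<and> \<gamma> \<in> (if l < L then {1..r l} else {1..Y}) \<and> \<alpha> \<in> {1..r (l-1)}"
        have "(l, 1, \<gamma>, \<alpha>) \<in> ?I"
        proof (cases "l < L")
          case True
          then show ?thesis using h unfolding ht_shared_idx_def by auto
        next
          case False
          then have "l = L" "\<gamma> \<in> {1..Y}" using h by auto
          then show ?thesis using h unfolding ht_shared_idx_def by auto
        qed
        then show "?w1 (l, 1, \<gamma>, \<alpha>) = W0 l j \<gamma> \<alpha>" by (simp add: w0_def W0_def)
      qed
      have d1: "Determinant.det (tmat (m^n) e N (ht_phi (\<lambda>l j \<gamma> \<alpha>. ?w1 (l, 1, \<gamma>, \<alpha>)) r L 1 y)) = 1"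
        by (rule top_identity[OF L Nd n_def m_def rpos H0 H emap einj y])
      have mem: "?w1 \<in> PiE ?I (\<lambda>_. UNIV)" by simp
      show "\<exists>w1 \<in> PiE ?I (\<lambda>_. UNIV). Determinant.det (tmat (m^n) e N (ht_phi (\<lambda>l j \<gamma> \<alpha>. w1 (l, 1, \<gamma>, \<alpha>)) r L 1 y)) \<noteq> 0"
      proof (rule bexI[where x="?w1"])
        show "Determinant.det (tmat (m^n) e N (ht_phi (\<lambda>l j \<gamma> \<alpha>. ?w1 (l, 1, \<gamma>, \<alpha>)) r L 1 y)) \<noteq> 0"
          unfolding d1 by simp
      qed (rule mem)
    qed
    then show "AE w in P. \<forall>y\<in>{1..Y}. not_CP_approximable f M N
               (tensor_fn f M N (ht_phi (\<lambda>l j \<gamma> \<alpha>. w (l, 1, \<gamma>, \<alpha>)) r L 1 y))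
               (min (r 0) M ^ (N div 2))"
      unfolding Nn m_def .
  qed
qed

end
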